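(* Let $Y$ be a $\mathbb{Q}$-vector space, let $f:\mathbb{R}\to Y$, let $s\ge 1$ and $\delta>0$, and let $I=(-\delta,0)$. If $\Delta_h^sf(x)=0$ for all $x\in\mathbb{R}$ and all $h\in I$, then $\Delta_{h_1h_2\cdots h_s}f(x)=0$ for all $(x,h_1,\dots,h_s)\in\mathbb{R}^{s+1}$. The same conclusion holds if instead the hypothesis is assumed for all $h\in(0,\delta)$.
   Context: For $f:X\to Y$ between $\mathbb{Q}$-vector spaces and $h\in X$, $\Delta_hf(x)=f(x+h)-f(x)$; iterated differences are $\Delta_{h_1h_2\cdots h_s}f(x)=\Delta_{h_1}\left(\Delta_{h_2\cdots h_s}f\right)(x)$; and $\Delta_h^sf(x)=\sum_{k=0}^s\binom{s}{k}(-1)^{s-k}f(x+kh)$ (i.e. $\Delta_{h_1\cdots h_s}f(x)$ with $h_1=\cdots=h_s=h$). *)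

theory Defs
  imports Main "HOL-Analysis.Analysis"
begin

definition fdiff :: "'a::ab_group_add \<Rightarrow> ('a \<Rightarrow> 'b::ab_group_add) \<Rightarrow> 'a \<Rightarrow> 'b" where
  "fdiff h f x = f (x + h) - f x"

fun idiff :: "'a::ab_group_add list \<Rightarrow> ('a \<Rightarrow> 'b::ab_group_add) \<Rightarrow> 'a \<Rightarrow> 'b" where
  "idiff [] f = f"
| "idiff (h # hs) f = fdiff h (idiff hs f)"

definition pdiff :: "(rat \<Rightarrow> 'b \<Rightarrow> 'b::ab_group_add) \<Rightarrow> nat \<Rightarrow> real \<Rightarrow> (real \<Rightarrow> 'b) \<Rightarrow> real \<Rightarrow> 'b" where
  "pdiff sc s h f x =
     (\<Sum>k\<in>{0..s}. sc (of_int ((s choose k) * (-1) ^ (s - k))) (f (x + real k * h)))"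

end

theory Submission
  imports Defs
begin


lemma fdiff_commute: "fdiff a (fdiff b G) = fdiff b (fdiff a G)"
  by (rule ext) (simp add: fdiff_def algebra_simps add.commute add.left_commute)

lemma idiff_append: "idiff (xs @ ys) g = idiff xs (idiff ys g)"
  by (induction xs) auto

lemma idiff_move: "idiff (ys1 @ a # ys2) g = idiff (a # ys1 @ ys2) g"
  by (induction ys1) (auto simp: fdiff_commute)

lemma idiff_perm: "mset xs = mset ys \<Longrightarrow> idiff xs g = idiff ys g"
proof (induction xs arbitrary: ys)
  case Nil then show ?case by simp
next
  case (Cons a xs)
  then have "a \<in> set ys" by (metis list.set_intros(1) set_mset_mset)
  then obtain ys1 ys2 where ys: "ys = ys1 @ a # ys2" by (meson split_list)
  with Cons.prems have "mset xs = mset (ys1 @ ys2)" by simp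
  then have "idiff xs g = idiff (ys1 @ ys2) g" using Cons.IH by blast
  then show ?case using ys idiff_move[of ys1 a ys2 g] by simp
qed

lemma idiff_zero_fun: "idiff ks (\<lambda>_. 0) = (\<lambda>_. 0)"
  by (induction ks) (auto simp: fdiff_def)

lemma fdiff_0: "fdiff 0 g = (\<lambda>_. 0)"
  by (auto simp: fdiff_def)

lemma idiff_add_dir: "idiff ((a+b) # R) g x = idiff (a # R) g x + idiff (b # R) g x + idiff (a # b # R) g x"
  by (simp add: fdiff_def algebra_simps add.commute add.left_commute)

lemma idiff_diff_fun: "idiff ks (\<lambda>y. g1 y - g2 y) x = idiff ks g1 x - idiff ks g2 x"
  by (induction ks arbitrary: x) (auto simp: fdiff_def algebra_simps)

lemma idiff_add_fun: "idiff ks (\<lambda>y. g1 y + g2 y) x = idiff ks g1 x + idiff ks g2 x"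
  by (induction ks arbitrary: x) (auto simp: fdiff_def algebra_simps)

lemma idiff_sum_fun: "finite A \<Longrightarrow> idiff ks (\<lambda>y. \<Sum>i\<in>A. g i y) x = (\<Sum>i\<in>A. idiff ks (g i) x)"
proof (induction A rule: finite_induct)
  case empty then show ?case by (simp add: idiff_zero_fun)
next
  case (insert a A) then show ?case by (simp add: idiff_add_fun)
qed

definition Msum :: "real set \<Rightarrow> real set" where
  "Msum H = {sum_list l | l. set l \<subseteq> H}"

lemma Msum_add: "a \<in> Msum H \<Longrightarrow> b \<in> Msum H \<Longrightarrow> a + b \<in> Msum H"
  unfolding Msum_def by clarsimp (metis le_sup_iff set_append sum_list_append)

lemma Msum_0: "0 \<in> Msum H"
  unfolding Msum_def by (auto intro: exI[of _ "[]"])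

lemma Msum_base: "h \<in> H \<Longrightarrow> h \<in> Msum H"
  unfolding Msum_def by (auto intro!: exI[of _ "[h]"])

lemma idiff_cong_M:
  assumes "\<And>y. y \<in> Msum H \<Longrightarrow> g y = g' y"
  shows "set ks \<subseteq> Msum H \<Longrightarrow> e \<in> Msum H \<Longrightarrow> idiff ks g e = idiff ks g' e"
proof (induction ks arbitrary: e)
  case Nil then show ?case using assms by simp
next
  case (Cons k ks) then show ?case by (simp add: fdiff_def Msum_add)
qed

lemma idiff_perm_cons: "idiff (a # xs @ ys) g = idiff (xs @ a # ys) g"
  by (rule idiff_perm) simp

lemma Z_gen:
  fixes f :: "real \<Rightarrow> 'b::ab_group_add"
  assumes base: "\<And>ks x. set ks \<subseteq> H \<Longrightarrow> n \<le> length ks \<Longrightarrow> idiff ks f x = 0"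
  shows "set ks \<subseteq> Msum H \<Longrightarrow> set pre \<subseteq> H \<Longrightarrow> n \<le> length ks + length pre \<Longrightarrow> idiff (ks @ pre) f x = 0"
proof (induction ks arbitrary: pre x)
  case Nil then show ?case using base by simp
next
  case (Cons k ks)
  from Cons.prems(1) obtain l where kl: "k = sum_list l" "set l \<subseteq> H" unfolding Msum_def by auto
  have ks: "set ks \<subseteq> Msum H" using Cons.prems(1) by simp
  note outer = Cons.IH
  have "\<forall>pre x. set pre \<subseteq> H \<longrightarrow> n \<le> Suc (length ks) + length pre \<longrightarrow> idiff (sum_list l # ks @ pre) f x = 0"
    using kl(2)
  proof (induction l)
    case Nil then show ?case by (simp add: fdiff_0)
  next
    case (Cons h l)
    show ?case
    proof (intro allI impI)
      fix pre x assume pre: "set pre \<subseteq> H" and len: "n \<le> Suc (length ks) + length pre"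
      have h: "h \<in> H" using Cons.prems by simp
      have t1: "idiff (h # ks @ pre) f x = 0"
      proof -
        have "idiff (ks @ h # pre) f x = 0" using outer[of "h # pre" x] ks pre len h by simp
        then show ?thesis using idiff_perm_cons[of h ks pre f] by simp
      qed
      have t2: "idiff (sum_list l # ks @ pre) f x = 0" using Cons pre len by auto
      have t3: "idiff (h # sum_list l # ks @ pre) f x = 0"
      proof -
        have "idiff (h # sum_list l # ks @ pre) f = idiff (sum_list l # ks @ h # pre) f"
          by (rule idiff_perm) simp
        moreover have "idiff (sum_list l # ks @ h # pre) f x = 0" using Cons pre len h by auto
        ultimately show ?thesis by simp
      qed
      show "idiff (sum_list (h # l) # ks @ pre) f x = 0"
        using idiff_add_dir[of h "sum_list l" "ks @ pre" f x] t1 t2 t3 by simp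
    qed
  qed
  then show ?case using Cons.prems kl by auto
qed

lemma Z:
  fixes f :: "real \<Rightarrow> 'b::ab_group_add"
  assumes base: "\<And>ks x. set ks \<subseteq> H \<Longrightarrow> n \<le> length ks \<Longrightarrow> idiff ks f x = 0"
  shows "set ks \<subseteq> Msum H \<Longrightarrow> n \<le> length ks \<Longrightarrow> idiff ks f x = 0"
  using Z_gen[OF base, where ks=ks and pre="[]"] by simp

definition Psi :: "(real \<Rightarrow> 'b::ab_group_add) \<Rightarrow> real \<Rightarrow> real list \<Rightarrow> real list \<Rightarrow> real \<Rightarrow> 'b" where
  "Psi f x cs es e = idiff (map ((+) e) cs @ es) f x"

context
  fixes f :: "real \<Rightarrow> 'b::ab_group_add" and H :: "real set" and d :: nat
  assumes KM: "\<And>ks y. set ks \<subseteq> Msum H \<Longrightarrow> Suc d \<le> length ks \<Longrightarrow> idiff ks f y = 0"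
begin

lemma add_slot:
  assumes "a \<in> Msum H" "b \<in> Msum H" "set R \<subseteq> Msum H" "Suc (length R) = d"
  shows "idiff ((a+b)#R) f y = idiff (a#R) f y + idiff (b#R) f y"
proof -
  have "idiff (a # b # R) f y = 0" using KM[of "a # b # R" y] assms by simp
  then show ?thesis using idiff_add_dir[of a b R f y] by simp
qed

lemma T:
  assumes "k \<in> Msum H" 
  shows "set cs \<subseteq> Msum H \<Longrightarrow> set es \<subseteq> Msum H \<Longrightarrow> length cs + length es = d \<Longrightarrow> e \<in> Msum H \<Longrightarrow>
    Psi f x cs es (e + k) - Psi f x cs es e =
    (\<Sum>i<length cs. Psi f x (take i cs @ map ((+) k) (drop (Suc i) cs)) (k # es) e)"
proof (induction cs arbitrary: es)
  case Nil then show ?case by (simp add: Psi_def)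
next
  case (Cons c cs)
  define L where "L e' = map ((+) e') cs @ es" for e'
  have LM: "set (L e') \<subseteq> Msum H" if "e' \<in> Msum H" for e'
    using Cons.prems that by (auto simp: L_def Msum_add)
  have lenL: "Suc (length (L e')) = d" for e' using Cons.prems by (simp add: L_def)
  have ek: "e + k \<in> Msum H" using Cons.prems assms Msum_add by blast
  have ec: "e + c \<in> Msum H" using Cons.prems Msum_add by auto
  have P: "Psi f x (c # cs) es e' = idiff ((e'+c) # L e') f x" for e'
    by (simp add: Psi_def L_def)
  have first: "idiff ((e + k + c) # L (e+k)) f x - idiff ((e+c) # L (e+k)) f x
      = Psi f x (map ((+) k) cs) (k # es) e"
  proof -
    have "idiff ((e + k + c) # L (e+k)) f x = idiff ((e+c) # L (e+k)) f x + idiff (k # L (e+k)) f x"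
      using add_slot[OF ec assms LM[OF ek] lenL, of x] by (simp add: add_ac)
    moreover have "idiff (k # L (e+k)) f = idiff (map ((+) e) (map ((+) k) cs) @ k # es) f"
    proof (rule idiff_perm)
    have "((+) (e+k)) = (\<lambda>x::real. x + (e+k))" by (rule ext) (simp add: add_ac)
    then show "mset (k # L (e+k)) = mset (map ((+) e) (map ((+) k) cs) @ k # es)"
      by (simp add: L_def add_ac comp_def)
  qed
    ultimately show ?thesis by (simp add: Psi_def)
  qed
  have second: "idiff ((e+c) # L e') f x = Psi f x cs ((e+c) # es) e'" for e'
    unfolding Psi_def L_def by (rule fun_cong[OF idiff_perm]) simp
  have IH: "Psi f x cs ((e+c) # es) (e + k) - Psi f x cs ((e+c) # es) e =
    (\<Sum>i<length cs. Psi f x (take i cs @ map ((+) k) (drop (Suc i) cs)) (k # (e+c) # es) e)"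
    using Cons.IH[of "(e+c) # es"] Cons.prems ec by simp
  have re: "Psi f x (take i cs @ map ((+) k) (drop (Suc i) cs)) (k # (e+c) # es) e
     = Psi f x (take (Suc i) (c#cs) @ map ((+) k) (drop (Suc (Suc i)) (c#cs))) (k # es) e" for i
    unfolding Psi_def by (rule fun_cong[OF idiff_perm]) simp
  have "Psi f x (c # cs) es (e + k) - Psi f x (c # cs) es e =
     (idiff ((e + k + c) # L (e+k)) f x - idiff ((e+c) # L (e+k)) f x)
     + (idiff ((e+c) # L (e+k)) f x - idiff ((e+c) # L e) f x)"
    by (simp add: P)
  also have "\<dots> = Psi f x (map ((+) k) cs) (k # es) e +
     (\<Sum>i<length cs. Psi f x (take (Suc i) (c#cs) @ map ((+) k) (drop (Suc (Suc i)) (c#cs))) (k # es) e)"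
    using first second IH re by simp
  also have "\<dots> = (\<Sum>i<length (c#cs). Psi f x (take i (c#cs) @ map ((+) k) (drop (Suc i) (c#cs))) (k # es) e)"
    by (simp only: length_Cons sum.lessThan_Suc_shift) simp
  finally show ?case .
qed

lemma C:
  fixes sc :: "rat \<Rightarrow> 'b \<Rightarrow> 'b"
  assumes vs: "vector_space sc"
  shows "set ks \<subseteq> Msum H \<Longrightarrow> \<forall>cs es e. set cs \<subseteq> Msum H \<longrightarrow> set es \<subseteq> Msum H \<longrightarrow> length cs + length es = d
    \<longrightarrow> e \<in> Msum H \<longrightarrow> length cs \<le> length ks \<longrightarrow>
    idiff ks (Psi f x cs es) e = (if length ks = length cs then sc (of_nat (fact (length ks))) (idiff (ks @ es) f x) else 0)"
proof (induction ks rule: rev_induct)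
  case Nil
  interpret vector_space sc by (rule vs)
  show ?case by (simp add: Psi_def)
next
  case (snoc k ks)
  interpret vector_space sc by (rule vs)
  have k: "k \<in> Msum H" and ks: "set ks \<subseteq> Msum H" using snoc.prems by auto
  show ?case
  proof (intro allI impI)
    fix cs es e assume cs: "set cs \<subseteq> Msum H" and es: "set es \<subseteq> Msum H" and len: "length cs + length es = d"
      and e: "e \<in> Msum H" and le: "length cs \<le> length (ks @ [k])"
    define F where "F i = take i cs @ map ((+) k) (drop (Suc i) cs)" for i
    have FM: "set (F i) \<subseteq> Msum H" for i using cs k
      by (auto simp: F_def Msum_add dest: in_set_takeD in_set_dropD)
    have Flen: "i < length cs \<Longrightarrow> length (F i) = length cs - 1" for i
      by (simp add: F_def)
    have kes: "set (k # es) \<subseteq> Msum H" using k es by simp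
    have "idiff (ks @ [k]) (Psi f x cs es) e = idiff ks (fdiff k (Psi f x cs es)) e"
      by (simp add: idiff_append)
    also have "\<dots> = idiff ks (\<lambda>e'. \<Sum>i<length cs. Psi f x (F i) (k # es) e') e"
    proof (rule idiff_cong_M[OF _ ks e])
      fix y assume y: "y \<in> Msum H"
      show "fdiff k (Psi f x cs es) y = (\<Sum>i<length cs. Psi f x (F i) (k # es) y)"
        using T[OF k cs es len y, of x] by (simp add: fdiff_def F_def)
    qed
    also have "\<dots> = (\<Sum>i<length cs. idiff ks (Psi f x (F i) (k # es)) e)"
      by (rule idiff_sum_fun) simp
    also have "\<dots> = (\<Sum>i<length cs. (if length ks = length cs - 1 then sc (of_nat (fact (length ks))) (idiff (ks @ k # es) f x) else 0))"
    proof (rule sum.cong[OF refl])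
      fix i assume i: "i \<in> {..<length cs}"
      then show "idiff ks (Psi f x (F i) (k # es)) e = (if length ks = length cs - 1 then sc (of_nat (fact (length ks))) (idiff (ks @ k # es) f x) else 0)"
        using snoc.IH[OF ks] FM[of i] kes len e le Flen[of i] by auto
    qed
    also have "\<dots> = (if length (ks @ [k]) = length cs then sc (of_nat (fact (length (ks @ [k])))) (idiff ((ks @ [k]) @ es) f x) else 0)"
    proof (cases "length (ks @ [k]) = length cs")
      case True
      then have "length ks = length cs - 1" by simp
      then have "(\<Sum>i<length cs. (if length ks = length cs - 1 then sc (of_nat (fact (length ks))) (idiff (ks @ k # es) f x) else 0))
         = sc (of_nat (length cs) * of_nat (fact (length ks))) (idiff (ks @ k # es) f x)"
        by (simp add: scale_sum_left[symmetric] flip: scale_scale)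
      also have "of_nat (length cs) * of_nat (fact (length ks)) = (of_nat (fact (length (ks @ [k]))) :: rat)"
        using True by (metis fact_Suc length_append_singleton of_nat_fact of_nat_mult)
      finally have eq: "(\<Sum>i<length cs. (if length ks = length cs - 1 then sc (of_nat (fact (length ks))) (idiff (ks @ k # es) f x) else 0))
         = sc (of_nat (fact (length (ks @ [k])))) (idiff (ks @ k # es) f x)" .
      have ap: "(ks @ [k]) @ es = ks @ k # es" by simp
      show ?thesis using True eq by (simp only: ap True simp_thms if_True)
    next
      case False
      then have "length ks \<noteq> length cs - 1 \<or> cs = []" using le by (cases cs) auto
      then show ?thesis using False by auto
    qed
    finally show "idiff (ks @ [k]) (Psi f x cs es) e = (if length (ks @ [k]) = length cs then sc (of_nat (fact (length (ks @ [k])))) (idiff ((ks @ [k]) @ es) f x) else 0)" .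
  qed
qed

lemma C':
  fixes sc :: "rat \<Rightarrow> 'b \<Rightarrow> 'b"
  assumes vs: "vector_space sc" and "set ks \<subseteq> Msum H" "set cs \<subseteq> Msum H" "set es \<subseteq> Msum H"
    "length cs + length es = d" "e \<in> Msum H" "length cs \<le> length ks"
  shows "idiff ks (Psi f x cs es) e = (if length ks = length cs then sc (of_nat (fact (length ks))) (idiff (ks @ es) f x) else 0)"
  using C[OF vs assms(2)] assms by blast

end

lemma pigeon:
  assumes "finite H" "set ks \<subseteq> H" "s * (card H + 1) \<le> length ks" "1 \<le> s"
  shows "\<exists>h\<in>H. s \<le> count (mset ks) h"
proof (rule ccontr)
  assume "\<not> ?thesis"
  then have lt: "\<forall>h\<in>H. count (mset ks) h \<le> s - 1" by auto
  have "length ks = sum (count (mset ks)) (set ks)"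
    using size_multiset_overloaded_eq[of "mset ks"] by simp
  also have "\<dots> \<le> sum (count (mset ks)) H" by (rule sum_mono2) (use assms in auto)
  also have "\<dots> \<le> sum (\<lambda>_. s - 1) H" by (rule sum_mono) (use lt in auto)
  also have "\<dots> = card H * (s - 1)" by simp
  also have "\<dots> < s * (card H + 1)"
    using assms(4) by (cases s) (auto simp: algebra_simps)
  finally show False using assms(3) by simp
qed

lemma replicate_vanish:
  assumes H0: "\<And>h y. idiff (replicate s h) f y = 0" and "s \<le> d"
  shows "idiff (replicate d e) f y = 0"
proof -
  have "replicate d e = replicate (d - s) e @ replicate s e"
    using assms(2) by (metis le_add_diff_inverse2 replicate_add)
  moreover have "idiff (replicate s e) f = (\<lambda>_. 0)" using H0 by (simp add: fun_eq_iff)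
  ultimately show ?thesis by (simp add: idiff_append idiff_zero_fun)
qed

lemma main:
  fixes sc :: "rat \<Rightarrow> 'b::ab_group_add \<Rightarrow> 'b" and f :: "real \<Rightarrow> 'b" and hs :: "real list"
  assumes vs: "vector_space sc" and H0: "\<And>h y. idiff (replicate s h) f y = 0" and s1: "1 \<le> s"
  shows "length hs = s \<Longrightarrow> idiff hs f x = 0"
proof -
  assume lhs: "length hs = s"
  define H where "H = set hs"
  define N where "N = s * (card H + 1)"
  have finH: "finite H" by (simp add: H_def)
  define K where "K d \<longleftrightarrow> (\<forall>ks y. set ks \<subseteq> H \<longrightarrow> d \<le> length ks \<longrightarrow> idiff ks f y = 0)" for d
  have base: "K N" unfolding K_def
  proof (intro allI impI)
    fix ks y assume ks: "set ks \<subseteq> H" and len: "N \<le> length ks"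
    obtain h where h: "s \<le> count (mset ks) h" using pigeon[OF finH ks _ s1] len N_def by auto
    obtain rest where rest: "mset rest = mset ks - replicate_mset s h" using ex_mset by blast
    have "mset ks = mset (rest @ replicate s h)"
      using h rest by (simp add: count_le_replicate_mset_subset_eq)
    then have "idiff ks f = idiff (rest @ replicate s h) f" by (rule idiff_perm)
    also have "\<dots> = idiff rest (\<lambda>_. 0)"
    proof -
      have rep0: "idiff (replicate s h) f = (\<lambda>_. 0)" using H0 by (simp add: fun_eq_iff)
      show ?thesis by (simp add: idiff_append rep0)
    qed
    finally show "idiff ks f y = 0" by (simp add: idiff_zero_fun)
  qed
  have sN: "s \<le> N" by (simp add: N_def)
  have step: "K d" if d: "s \<le> d" "d < N" and Kd: "K (Suc d)" for d
    unfolding K_def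
  proof (intro allI impI)
    fix ks y assume ks: "set ks \<subseteq> H" and len: "d \<le> length ks"
    show "idiff ks f y = 0"
    proof (cases "length ks = d")
      case False then show ?thesis using Kd ks len unfolding K_def by auto
    next
      case True
      have KM: "\<And>ks y. set ks \<subseteq> Msum H \<Longrightarrow> Suc d \<le> length ks \<Longrightarrow> idiff ks f y = 0"
        using Z[of H "Suc d" f] Kd unfolding K_def by blast
      have ksM: "set ks \<subseteq> Msum H" using ks Msum_base by blast
      have "idiff ks (Psi f y (replicate d 0) []) 0 = sc (of_nat (fact d)) (idiff ks f y)"
      proof -
        have r: "set (replicate d (0::real)) \<subseteq> Msum H" using Msum_0 by auto
        show ?thesis using C'[OF KM vs ksM r, where es="[]" and e=0 and x=y] True Msum_0 by simp
      qed
      moreover have "Psi f y (replicate d 0) [] = (\<lambda>_. 0)"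
        using replicate_vanish[OF H0 d(1)] by (simp add: Psi_def fun_eq_iff)
      ultimately have "sc (of_nat (fact d)) (idiff ks f y) = 0" by (simp add: idiff_zero_fun)
      then show ?thesis using vector_space.scale_eq_0_iff[OF vs] by simp
    qed
  qed
  have "K s"
    by (rule inc_induct[OF sN, of K]) (use base step in auto)
  then show "idiff hs f x = 0" unfolding K_def H_def using lhs by auto
qed



definition cc :: "nat \<Rightarrow> nat \<Rightarrow> rat" where
  "cc s k = rat_of_int (int (s choose k) * (-1) ^ (s - k))"

lemma cc_0: "cc (Suc s) 0 = - cc s 0" by (simp add: cc_def)
lemma cc_Suc: "cc (Suc s) (Suc k) = cc s k - cc s (Suc k)"
proof (cases "k < s")
  case True
  then have "s - k = Suc (s - Suc k)" by simp
  then show ?thesis by (simp add: cc_def algebra_simps)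
next
  case False
  then have "s choose Suc k = 0" by simp
  moreover have "Suc s - Suc k = s - k" by simp
  ultimately show ?thesis by (simp add: cc_def)
qed
lemma cc_big: "cc s (Suc s) = 0" by (simp add: cc_def)

lemma pascal_sum:
  assumes vs: "vector_space sc"
  shows "(\<Sum>k=0..s. sc (cc s k) (g (Suc k))) - (\<Sum>k=0..s. sc (cc s k) (g k)) = (\<Sum>k=0..Suc s. sc (cc (Suc s) k) (g k))"
proof -
  interpret vector_space sc by (rule vs)
  have A: "(\<Sum>k=0..Suc s. sc (cc (Suc s) k) (g k)) = sc (cc (Suc s) 0) (g 0) + (\<Sum>k=0..s. sc (cc (Suc s) (Suc k)) (g (Suc k)))"
    by (simp only: sum.atLeast0_atMost_Suc_shift comp_def)
  have B: "(\<Sum>k=0..s. sc (cc (Suc s) (Suc k)) (g (Suc k))) = (\<Sum>k=0..s. sc (cc s k) (g (Suc k))) - (\<Sum>k=0..s. sc (cc s (Suc k)) (g (Suc k)))"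
    by (simp add: cc_Suc scale_left_diff_distrib sum_subtractf)
  have C: "(\<Sum>k=0..Suc s. sc (cc s k) (g k)) = sc (cc s 0) (g 0) + (\<Sum>k=0..s. sc (cc s (Suc k)) (g (Suc k)))"
    by (simp only: sum.atLeast0_atMost_Suc_shift comp_def)
  have D: "(\<Sum>k=0..Suc s. sc (cc s k) (g k)) = (\<Sum>k=0..s. sc (cc s k) (g k))"
    by (simp add: cc_big)
  have E: "sc (cc (Suc s) 0) (g 0) = - sc (cc s 0) (g 0)" by (simp add: cc_0 scale_minus_left)
  have Y: "(\<Sum>k=0..s. sc (cc s k) (g k)) = sc (cc s 0) (g 0) + (\<Sum>k=0..s. sc (cc s (Suc k)) (g (Suc k)))"
    using C D by metis
  show ?thesis unfolding A B E Y by (simp add: algebra_simps)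
qed

lemma pdiff_idiff:
  assumes vs: "vector_space sc"
  shows "pdiff sc s h f x = idiff (replicate s h) f x"
proof (induction s arbitrary: x)
  case 0
  interpret vector_space sc by (rule vs)
  show ?case by (simp add: pdiff_def)
next
  case (Suc s)
  have e: "pdiff sc s h f y = (\<Sum>k=0..s. sc (cc s k) (f (y + real k * h)))" for y
    by (simp add: pdiff_def cc_def)
  have "idiff (replicate (Suc s) h) f x = pdiff sc s h f (x + h) - pdiff sc s h f x"
    using Suc by (simp add: fdiff_def)
  also have "\<dots> = (\<Sum>k=0..s. sc (cc s k) ((\<lambda>k. f (x + real k * h)) (Suc k))) - (\<Sum>k=0..s. sc (cc s k) ((\<lambda>k. f (x + real k * h)) k))"
    by (simp add: e algebra_simps)
  also have "\<dots> = (\<Sum>k=0..Suc s. sc (cc (Suc s) k) (f (x + real k * h)))"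
    by (rule pascal_sum[OF vs])
  also have "\<dots> = pdiff sc (Suc s) h f x" by (simp add: pdiff_def cc_def)
  finally show ?case by simp
qed


lemma idiff_neg: "idiff (replicate n (-(h::real))) g x = (if even n then idiff (replicate n h) g (x - real n * h) else - idiff (replicate n h) g (x - real n * h))"
proof (induction n arbitrary: x)
  case 0 then show ?case by simp
next
  case (Suc n)
  have a1: "x + - h - real n * h = x - real (Suc n) * h" by (simp add: algebra_simps)
  have a2: "x - real (Suc n) * h + h = x - real n * h" by (simp add: algebra_simps)
  show ?case using Suc[of "x + - h"] Suc[of x] by (simp add: fdiff_def a1 a2 algebra_simps)
qed

lemma rep_vanish1:
  assumes H0: "\<And>y. idiff (replicate s h) f y = 0" and "s \<le> d"
  shows "idiff (replicate d h) f y = 0"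
proof -
  have "replicate d h = replicate (d - s) h @ replicate s h"
    using assms(2) by (metis le_add_diff_inverse2 replicate_add)
  moreover have "idiff (replicate s h) f = (\<lambda>_. 0)" using H0 by (simp add: fun_eq_iff)
  ultimately show ?thesis by (simp add: idiff_append idiff_zero_fun)
qed

lemma scale_dir:
  fixes f :: "real \<Rightarrow> 'b::ab_group_add" and h :: real
  assumes H0: "\<And>y. idiff (replicate s h) f y = 0"
  shows "idiff (replicate s (real n * h)) f y = 0"
proof -
  have base: "idiff ks f x = 0" if "set ks \<subseteq> {h}" "s \<le> length ks" for ks x
  proof -
    have "ks = replicate (length ks) h" using that(1) by (metis replicate_length_same singletonD subsetD)
    then show ?thesis using rep_vanish1[OF H0 that(2)] by metis
  qed
  have "real n * h \<in> Msum {h}" unfolding Msum_def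
    by (rule CollectI, rule exI[of _ "replicate n h"]) (auto simp: sum_list_replicate)
  then have "set (replicate s (real n * h)) \<subseteq> Msum {h}" by (simp add: set_replicate_conv_if)
  then show ?thesis using Z[where H="{h}" and n=s, OF base, where ks="replicate s (real n * h)"] by auto
qed

lemma zero_dir:
  assumes "1 \<le> s" shows "idiff (replicate s 0) f y = 0"
proof -
  obtain t where "s = Suc t" using assms by (cases s) auto
  then show ?thesis by (simp add: fdiff_def)
qed

lemma neg_dir:
  fixes h :: real
  assumes "\<And>y. idiff (replicate s h) f y = 0"
  shows "idiff (replicate s (-h)) f y = 0"
  using idiff_neg[of s h f y] assms by simp

lemma ext_pos:
  fixes f :: "real \<Rightarrow> 'b::ab_group_add"
  assumes d: "\<delta> > 0" and s: "1 \<le> s" and H: "\<And>h y. h \<in> {0<..<\<delta>} \<Longrightarrow> idiff (replicate s h) f y = 0"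
  shows "idiff (replicate s h) f y = 0"
proof -
  have pos: "idiff (replicate s h) f y = 0" if hp: "h > 0" for h y
  proof -
    define n where "n = nat \<lceil>h / \<delta>\<rceil> + 1"
    have npos: "real n > 0" by (simp add: n_def)
    have "h / \<delta> < real n"
      using real_nat_ceiling_ge[of "h / \<delta>"] by (simp add: n_def)
    then have "h < real n * \<delta>" using d by (simp add: field_simps)
    then have hin: "h / real n \<in> {0<..<\<delta>}" using hp npos by (simp add: field_simps)
    have "idiff (replicate s (real n * (h / real n))) f y = 0"
      by (rule scale_dir) (use H[OF hin] in auto)
    then show ?thesis using npos by simp
  qed
  show ?thesis
  proof (cases "h > 0")
    case True then show ?thesis using pos by blast
  next
    case False
    show ?thesis
    proof (cases "h = 0")
      case True then show ?thesis using zero_dir[OF s] by simp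
    next
      case False
      then have "-h > 0" using \<open>\<not> h > 0\<close> by simp
      then show ?thesis using neg_dir[of s "-h" f y] pos by simp
    qed
  qed
qed

lemma ext_neg:
  fixes f :: "real \<Rightarrow> 'b::ab_group_add"
  assumes d: "\<delta> > 0" and s: "1 \<le> s" and H: "\<And>h y. h \<in> {-\<delta><..<0} \<Longrightarrow> idiff (replicate s h) f y = 0"
  shows "idiff (replicate s h) f y = 0"
proof -
  have H': "idiff (replicate s h) f y = 0" if "h \<in> {0<..<\<delta>}" for h y
  proof -
    have "idiff (replicate s (- h)) f y = 0" for y using H[of "-h"] that by auto
    then show ?thesis using neg_dir[of s "-h" f y] by simp
  qed
  show ?thesis by (rule ext_pos[OF d s H'])
qed

theorem theorem3:
  fixes sc :: "rat \<Rightarrow> 'b::ab_group_add \<Rightarrow> 'b"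
    and f :: "real \<Rightarrow> 'b" and s :: nat and \<delta> :: real
  assumes "vector_space sc"
    and "s \<ge> 1" and "\<delta> > 0"
  shows "((\<forall>x. \<forall>h\<in>{-\<delta><..<0}. pdiff sc s h f x = 0)
            \<longrightarrow> (\<forall>x hs. length hs = s \<longrightarrow> idiff hs f x = 0))
       \<and> ((\<forall>x. \<forall>h\<in>{0<..<\<delta>}. pdiff sc s h f x = 0)
            \<longrightarrow> (\<forall>x hs. length hs = s \<longrightarrow> idiff hs f x = 0))"
proof (intro conjI impI allI)
  fix x :: real and hs :: "real list"
  assume A: "\<forall>x. \<forall>h\<in>{-\<delta><..<0}. pdiff sc s h f x = 0" and l: "length hs = s"
  have "idiff (replicate s h) f y = 0" for h y
    by (rule ext_neg[OF assms(3) assms(2)]) (use A pdiff_idiff[OF assms(1)] in auto)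
  then show "idiff hs f x = 0" using main[OF assms(1) _ assms(2) l] by blast
next
  fix x :: real and hs :: "real list"
  assume A: "\<forall>x. \<forall>h\<in>{0<..<\<delta>}. pdiff sc s h f x = 0" and l: "length hs = s"
  have "idiff (replicate s h) f y = 0" for h y
    by (rule ext_pos[OF assms(3) assms(2)]) (use A pdiff_idiff[OF assms(1)] in auto)
  then show "idiff hs f x = 0" using main[OF assms(1) _ assms(2) l] by blast
qed

end
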